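(* Consider an episodic RMDP with $\mathcal{S}\times\mathcal{A}$-rectangular robust sets, and let $\pi^\star$ be an optimal robust policy. For any Markov policy $\pi$ and any $s\in\mathcal{S}$, $$V^{\pi^\star}_{1,P^\star,\boldsymbol{\Phi}}(s)-V^{\pi}_{1,P^\star,\boldsymbol{\Phi}}(s)\ge\mathbb{E}_{(P^{\pi^\star,\dagger},\pi^\star)}\Big[\sum_{h=1}^H\sum_{a\in\mathcal{A}}\big(\pi^\star_h(a|s_h)-\pi_h(a|s_h)\big)Q^\pi_{h,P^\star,\boldsymbol{\Phi}}(s_h,a)\ \Big|\ s_1=s\Big],$$ where the expectation is over trajectories generated by the policy $\pi^\star$ and the transition kernels $P^{\pi^\star,\dagger}$.
   Context: An episodic RMDP $(\mathcal{S},\mathcal{A},H,P^\star,R,\boldsymbol{\Phi})$ has finite $\mathcal{S},\mathcal{A}$, nominal kernels $P^\star_h$, rewards $R_h\in[0,1]$. $\mathcal{S}\times\mathcal{A}$-rectangularity: $\boldsymbol{\Phi}(P_h)=\bigotimes_{(s,a)}\mathcal{P}(s,a;P_h)$ with $\mathcal{P}(s,a;P_h)\subseteq\Delta(\mathcal{S})$. Robust value functions of a Markov policy: $V^\pi_{h,P^\star,\boldsymbol{\Phi}}(s)$ and $Q^\pi_{h,P^\star,\boldsymbol{\Phi}}(s,a)$ are the infima, over all $\widetilde P_i(\cdot|s',a')\in\mathcal{P}(s',a';P^\star_i)$, of the expected $\sum_{i=h}^HR_i(s_i,a_i)$ under $\pi$ starting from $s_h=s$ (resp. $(s_h,a_h)=(s,a)$);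 $V_{H+1}\equiv0$. An optimal robust policy maximizes $V^\pi_{1,P^\star,\boldsymbol{\Phi}}(s)$ for all $s$. The kernel $P^{\pi^\star,\dagger}_h(\cdot|s,a)$ is a minimizer of $\mathbb{E}_{P}[V^{\pi^\star}_{h+1,P^\star,\boldsymbol{\Phi}}]$ over $P\in\mathcal{P}(s,a;P^\star_h)$ (assumed to exist). *)

theory Defs
  imports "HOL-Analysis.Analysis"
begin

text \<open>Episodic RMDP with finite state type 's and action type 'a, horizon H,
steps indexed 1..H.  Kernels: nat => 's => 'a => 's => real (time step, state,
action, next state).\<close>

definition is_dist :: "('x::finite \<Rightarrow> real) \<Rightarrow> bool" where
  "is_dist p \<longleftrightarrow> (\<forall>x. 0 \<le> p x) \<and> (\<Sum>x\<in>UNIV. p x) = 1"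

definition markov_policy :: "nat \<Rightarrow> (nat \<Rightarrow> 's::finite \<Rightarrow> 'a::finite \<Rightarrow> real) \<Rightarrow> bool" where
  "markov_policy H \<pi> \<longleftrightarrow> (\<forall>h\<in>{1..H}. \<forall>s. is_dist (\<pi> h s))"

definition kernel :: "nat \<Rightarrow> (nat \<Rightarrow> 's::finite \<Rightarrow> 'a::finite \<Rightarrow> 's \<Rightarrow> real) \<Rightarrow> bool" where
  "kernel H P \<longleftrightarrow> (\<forall>h\<in>{1..H}. \<forall>s a. is_dist (P h s a))"

function evalV :: "nat \<Rightarrow> (nat \<Rightarrow> 's::finite \<Rightarrow> 'a::finite \<Rightarrow> real)
   \<Rightarrow> (nat \<Rightarrow> 's \<Rightarrow> 'a \<Rightarrow> 's \<Rightarrow> real) \<Rightarrow> (nat \<Rightarrow> 's \<Rightarrow> 'a \<Rightarrow> real) \<Rightarrow> nat \<Rightarrow> 's \<Rightarrow> real" where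
  "evalV H R Pt \<pi> h s = (if H < h then 0 else
     (\<Sum>a\<in>UNIV. \<pi> h s a * (R h s a + (\<Sum>s'\<in>UNIV. Pt h s a s' * evalV H R Pt \<pi> (Suc h) s'))))"
  by pat_completeness auto
termination
  by (relation "Wellfounded.measure (\<lambda>(H, R, Pt, \<pi>, h, s). Suc H - h)") auto

definition evalQ :: "nat \<Rightarrow> (nat \<Rightarrow> 's::finite \<Rightarrow> 'a::finite \<Rightarrow> real)
   \<Rightarrow> (nat \<Rightarrow> 's \<Rightarrow> 'a \<Rightarrow> 's \<Rightarrow> real) \<Rightarrow> (nat \<Rightarrow> 's \<Rightarrow> 'a \<Rightarrow> real) \<Rightarrow> nat \<Rightarrow> 's \<Rightarrow> 'a \<Rightarrow> real" where
  "evalQ H R Pt \<pi> h s a = R h s a + (\<Sum>s'\<in>UNIV. Pt h s a s' * evalV H R Pt \<pi> (Suc h) s')"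

text \<open>S x A-rectangular adversarial kernels: at each step i and each (s,a), the
kernel row is chosen independently from the robust set U (Pstar i) s a.\<close>
definition adversaries :: "nat \<Rightarrow> (nat \<Rightarrow> 's::finite \<Rightarrow> 'a::finite \<Rightarrow> 's \<Rightarrow> real)
   \<Rightarrow> (('s \<Rightarrow> 'a \<Rightarrow> 's \<Rightarrow> real) \<Rightarrow> 's \<Rightarrow> 'a \<Rightarrow> ('s \<Rightarrow> real) set)
   \<Rightarrow> (nat \<Rightarrow> 's \<Rightarrow> 'a \<Rightarrow> 's \<Rightarrow> real) set" where
  "adversaries H Pstar U = {Pt. \<forall>i\<in>{1..H}. \<forall>s a. Pt i s a \<in> U (Pstar i) s a}"

definition robustV where
  "robustV H R Pstar U \<pi> h s = (INF Pt \<in> adversaries H Pstar U. evalV H R Pt \<pi> h s)"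

definition robustQ where
  "robustQ H R Pstar U \<pi> h s a = (INF Pt \<in> adversaries H Pstar U. evalQ H R Pt \<pi> h s a)"

text \<open>Distribution of the state s_{k+1} of a trajectory started at s_1 = s,
generated by policy \<pi> and kernels Pt.\<close>
primrec occ :: "(nat \<Rightarrow> 's::finite \<Rightarrow> 'a::finite \<Rightarrow> 's \<Rightarrow> real) \<Rightarrow> (nat \<Rightarrow> 's \<Rightarrow> 'a \<Rightarrow> real)
   \<Rightarrow> 's \<Rightarrow> nat \<Rightarrow> 's \<Rightarrow> real" where
  "occ Pt \<pi> s 0 y = (if y = s then 1 else 0)"
| "occ Pt \<pi> s (Suc k) y =
     (\<Sum>x\<in>UNIV. \<Sum>a\<in>UNIV. occ Pt \<pi> s k x * \<pi> (Suc k) x a * Pt (Suc k) x a y)"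

definition traj_exp where
  "traj_exp H Pt \<pi> s g = (\<Sum>h=1..H. \<Sum>y\<in>UNIV. occ Pt \<pi> s (h - 1) y * g h y)"

end

theory Submission
  imports Defs
begin

declare evalV.simps[simp del]

locale rm =
  fixes H :: nat and R :: "nat \<Rightarrow> 's::finite \<Rightarrow> 'a::finite \<Rightarrow> real"
    and Pstar :: "nat \<Rightarrow> 's \<Rightarrow> 'a \<Rightarrow> 's \<Rightarrow> real"
    and U :: "('s \<Rightarrow> 'a \<Rightarrow> 's \<Rightarrow> real) \<Rightarrow> 's \<Rightarrow> 'a \<Rightarrow> ('s \<Rightarrow> real) set"
  assumes Rnn: "\<And>h x b. h \<in> {1..H} \<Longrightarrow> 0 \<le> R h x b"
    and Udist: "\<And>Q x b p. p \<in> U Q x b \<Longrightarrow> is_dist p"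
    and Une: "\<And>h x b. h \<in> {1..H} \<Longrightarrow> U (Pstar h) x b \<noteq> {}"
begin

lemma pnn: "p \<in> U Q x b \<Longrightarrow> 0 \<le> p y"
  using Udist unfolding is_dist_def by auto
lemma psum: "p \<in> U Q x b \<Longrightarrow> (\<Sum>y\<in>UNIV. p y) = 1"
  using Udist unfolding is_dist_def by auto

lemma adv_row: "Pt \<in> adversaries H Pstar U \<Longrightarrow> h \<in> {1..H} \<Longrightarrow> Pt h x a \<in> U (Pstar h) x a"
  by (auto simp: adversaries_def)

lemma pol_nn: "markov_policy H \<pi> \<Longrightarrow> h \<in> {1..H} \<Longrightarrow> 0 \<le> \<pi> h x a"
  unfolding markov_policy_def is_dist_def by auto
lemma pol_sum: "markov_policy H \<pi> \<Longrightarrow> h \<in> {1..H} \<Longrightarrow> (\<Sum>a\<in>UNIV. \<pi> h x a) = 1"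
  unfolding markov_policy_def is_dist_def by auto

function W :: "(nat \<Rightarrow> 's \<Rightarrow> 'a \<Rightarrow> real) \<Rightarrow> nat \<Rightarrow> 's \<Rightarrow> real" where
  "W \<pi> h x = (if H < h then 0 else (\<Sum>a\<in>UNIV. \<pi> h x a * (R h x a +
      (INF p\<in>U (Pstar h) x a. \<Sum>y\<in>UNIV. p y * W \<pi> (Suc h) y))))"
  by pat_completeness auto
termination
  by (relation "Wellfounded.measure (\<lambda>(\<pi>, h, x). Suc H - h)") auto

declare W.simps[simp del]

definition QW where
  "QW \<pi> h x a = R h x a + (INF p\<in>U (Pstar h) x a. \<Sum>y\<in>UNIV. p y * W \<pi> (Suc h) y)"

lemma W_unf: "h \<le> H \<Longrightarrow> W \<pi> h x = (\<Sum>a\<in>UNIV. \<pi> h x a * QW \<pi> h x a)"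
  by (subst W.simps) (simp add: QW_def)

lemma W_end: "H < h \<Longrightarrow> W \<pi> h x = 0"
  by (subst W.simps) simp

lemma evalV_unf: "h \<le> H \<Longrightarrow> evalV H R Pt \<pi> h x =
   (\<Sum>a\<in>UNIV. \<pi> h x a * (R h x a + (\<Sum>s'\<in>UNIV. Pt h x a s' * evalV H R Pt \<pi> (Suc h) s')))"
  by (subst evalV.simps) simp

lemma evalV_end: "H < h \<Longrightarrow> evalV H R Pt \<pi> h x = 0"
  by (subst evalV.simps) simp

lemma W_nn: assumes "markov_policy H \<pi>" "1 \<le> h" shows "0 \<le> W \<pi> h x"
  using assms(2)
proof (induction "Suc H - h" arbitrary: h x)
  case 0 then show ?case by (simp add: W_end)
next
  case (Suc k)
  then have hH: "h \<in> {1..H}" by auto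
  have IH: "\<And>y. 0 \<le> W \<pi> (Suc h) y" using Suc by auto
  have "0 \<le> QW \<pi> h x a" for a
    unfolding QW_def
    using Rnn[OF hH] Une[OF hH] IH pnn
    by (intro add_nonneg_nonneg cINF_greatest sum_nonneg mult_nonneg_nonneg) auto
  then show ?case using hH pol_nn[OF assms(1) hH]
    by (auto simp: W_unf intro!: sum_nonneg mult_nonneg_nonneg)
qed

lemma bdd: assumes "markov_policy H \<pi>"
  shows "bdd_below ((\<lambda>p. \<Sum>y\<in>UNIV. p y * W \<pi> (Suc h) y) ` U (Pstar h) x a)"
  using W_nn[OF assms, of "Suc h"] pnn
  by (intro bdd_belowI[where m=0]) (auto intro!: sum_nonneg mult_nonneg_nonneg)

lemma evalV_nn: assumes "Pt \<in> adversaries H Pstar U" "markov_policy H \<pi>" "1 \<le> h"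
  shows "0 \<le> evalV H R Pt \<pi> h x"
  using assms(3)
proof (induction "Suc H - h" arbitrary: h x)
  case 0 then show ?case by (simp add: evalV_end)
next
  case (Suc k)
  then have hH: "h \<in> {1..H}" by auto
  have IH: "\<And>y. 0 \<le> evalV H R Pt \<pi> (Suc h) y" using Suc by auto
  show ?case using hH pol_nn[OF assms(2) hH] Rnn[OF hH] IH pnn[OF adv_row[OF assms(1) hH]]
    by (auto simp: evalV_unf intro!: sum_nonneg mult_nonneg_nonneg add_nonneg_nonneg)
qed


lemma evalV_geW: assumes "Pt \<in> adversaries H Pstar U" "markov_policy H \<pi>" "1 \<le> h"
  shows "W \<pi> h x \<le> evalV H R Pt \<pi> h x"
  using assms(3)
proof (induction "Suc H - h" arbitrary: h x)
  case 0 then show ?case by (simp add: evalV_end W_end)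
next
  case (Suc k)
  then have hH: "h \<in> {1..H}" by auto
  have IH: "\<And>y. W \<pi> (Suc h) y \<le> evalV H R Pt \<pi> (Suc h) y" using Suc by auto
  have "QW \<pi> h x a \<le> R h x a + (\<Sum>s'\<in>UNIV. Pt h x a s' * evalV H R Pt \<pi> (Suc h) s')" for a
  proof -
    have "QW \<pi> h x a \<le> R h x a + (\<Sum>s'\<in>UNIV. Pt h x a s' * W \<pi> (Suc h) s')"
      unfolding QW_def using cINF_lower[OF bdd[OF assms(2)] adv_row[OF assms(1) hH]] by simp
    also have "\<dots> \<le> R h x a + (\<Sum>s'\<in>UNIV. Pt h x a s' * evalV H R Pt \<pi> (Suc h) s')"
      using IH pnn[OF adv_row[OF assms(1) hH]]
      by (intro add_left_mono sum_mono mult_left_mono) auto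
    finally show ?thesis .
  qed
  then show ?case using hH pol_nn[OF assms(2) hH]
    by (auto simp: W_unf evalV_unf intro!: sum_mono mult_left_mono)
qed

definition Pe where
  "Pe \<pi> \<epsilon> h x a = (SOME p. p \<in> U (Pstar h) x a \<and>
     (\<Sum>y\<in>UNIV. p y * W \<pi> (Suc h) y) \<le> (INF p\<in>U (Pstar h) x a. \<Sum>y\<in>UNIV. p y * W \<pi> (Suc h) y) + \<epsilon>)"

lemma Pe_prop: assumes "markov_policy H \<pi>" "0 < \<epsilon>" "h \<in> {1..H}"
  shows "Pe \<pi> \<epsilon> h x a \<in> U (Pstar h) x a \<and>
     (\<Sum>y\<in>UNIV. Pe \<pi> \<epsilon> h x a y * W \<pi> (Suc h) y) \<le> (INF p\<in>U (Pstar h) x a. \<Sum>y\<in>UNIV. p y * W \<pi> (Suc h) y) + \<epsilon>"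
proof -
  have "(INF p\<in>U (Pstar h) x a. \<Sum>y\<in>UNIV. p y * W \<pi> (Suc h) y) < (INF p\<in>U (Pstar h) x a. \<Sum>y\<in>UNIV. p y * W \<pi> (Suc h) y) + \<epsilon>"
    using assms(2) by simp
  then obtain p where "p \<in> U (Pstar h) x a" "(\<Sum>y\<in>UNIV. p y * W \<pi> (Suc h) y) < (INF p\<in>U (Pstar h) x a. \<Sum>y\<in>UNIV. p y * W \<pi> (Suc h) y) + \<epsilon>"
    using cINF_less_iff[OF Une[OF assms(3)] bdd[OF assms(1)]] by blast
  then have "\<exists>p. p \<in> U (Pstar h) x a \<and>
     (\<Sum>y\<in>UNIV. p y * W \<pi> (Suc h) y) \<le> (INF p\<in>U (Pstar h) x a. \<Sum>y\<in>UNIV. p y * W \<pi> (Suc h) y) + \<epsilon>"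
    by (intro exI[of _ p]) auto
  then show ?thesis unfolding Pe_def by (rule someI_ex)
qed

lemma Pe_adv: assumes "markov_policy H \<pi>" "0 < \<epsilon>"
  shows "Pe \<pi> \<epsilon> \<in> adversaries H Pstar U"
  using Pe_prop[OF assms] unfolding adversaries_def by auto

lemma evalV_Pe: assumes "markov_policy H \<pi>" "0 < \<epsilon>" "1 \<le> h"
  shows "evalV H R (Pe \<pi> \<epsilon>) \<pi> h x \<le> W \<pi> h x + real (Suc H - h) * \<epsilon>"
  using assms(3)
proof (induction "Suc H - h" arbitrary: h x)
  case 0 then show ?case by (simp add: evalV_end W_end)
next
  case (Suc k)
  then have hH: "h \<in> {1..H}" by auto
  define c where "c = real (Suc H - Suc h)"
  have c1: "1 + c = real (Suc H - h)" using hH unfolding c_def by auto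
  have IH: "\<And>y. evalV H R (Pe \<pi> \<epsilon>) \<pi> (Suc h) y \<le> W \<pi> (Suc h) y + c * \<epsilon>"
    unfolding c_def using Suc(1)[of "Suc h"] Suc(2) by (simp del: of_nat_diff)
  have "R h x a + (\<Sum>s'\<in>UNIV. Pe \<pi> \<epsilon> h x a s' * evalV H R (Pe \<pi> \<epsilon>) \<pi> (Suc h) s') \<le> QW \<pi> h x a + (1 + c) * \<epsilon>" for a
  proof -
    note P = Pe_prop[OF assms(1,2) hH, of x a]
    have "(\<Sum>s'\<in>UNIV. Pe \<pi> \<epsilon> h x a s' * evalV H R (Pe \<pi> \<epsilon>) \<pi> (Suc h) s')
        \<le> (\<Sum>s'\<in>UNIV. Pe \<pi> \<epsilon> h x a s' * (W \<pi> (Suc h) s' + c * \<epsilon>))"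
      using IH pnn[OF conjunct1[OF P]] by (intro sum_mono mult_left_mono) auto
    also have "\<dots> = (\<Sum>s'\<in>UNIV. Pe \<pi> \<epsilon> h x a s' * W \<pi> (Suc h) s') + c * \<epsilon>"
      using psum[OF conjunct1[OF P]]
      by (simp add: distrib_left sum.distrib flip: sum_distrib_right)
    finally show ?thesis using P unfolding QW_def by (simp add: algebra_simps)
  qed
  then have "evalV H R (Pe \<pi> \<epsilon>) \<pi> h x \<le> (\<Sum>a\<in>UNIV. \<pi> h x a * (QW \<pi> h x a + (1 + c) * \<epsilon>))"
    using hH pol_nn[OF assms(1) hH]
    by (auto simp: evalV_unf intro!: sum_mono mult_left_mono)
  also have "\<dots> = W \<pi> h x + (1 + c) * \<epsilon>"
    using hH pol_sum[OF assms(1) hH]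
    by (simp add: W_unf distrib_left sum.distrib flip: sum_distrib_right)
  finally show ?case using c1 by simp
qed

lemma le_eps: assumes "\<And>e. 0 < e \<Longrightarrow> (a::real) \<le> b + c * e" "0 \<le> c" shows "a \<le> b"
proof (rule field_le_epsilon)
  fix e :: real assume e: "0 < e"
  have "a \<le> b + c * (e / (c + 1))" using assms(1)[of "e / (c+1)"] e assms(2) by simp
  also have "c * (e / (c + 1)) \<le> e" using e assms(2) by (simp add: field_simps)
  finally show "a \<le> b + e" by simp
qed

lemma robustV_W: assumes "markov_policy H \<pi>" "1 \<le> h"
  shows "robustV H R Pstar U \<pi> h x = W \<pi> h x"
proof (rule antisym)
  have ne: "adversaries H Pstar U \<noteq> {}" using Pe_adv[OF assms(1), of 1] by auto
  have bd: "bdd_below ((\<lambda>Pt. evalV H R Pt \<pi> h x) ` adversaries H Pstar U)"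
    using evalV_nn[OF _ assms] by (intro bdd_belowI[where m=0]) auto
  show "W \<pi> h x \<le> robustV H R Pstar U \<pi> h x"
    unfolding robustV_def using evalV_geW[OF _ assms] by (intro cINF_greatest[OF ne]) auto
  show "robustV H R Pstar U \<pi> h x \<le> W \<pi> h x"
  proof (rule le_eps)
    fix e :: real assume e: "0 < e"
    show "robustV H R Pstar U \<pi> h x \<le> W \<pi> h x + real (Suc H - h) * e"
      unfolding robustV_def
      using cINF_lower[OF bd Pe_adv[OF assms(1) e]] evalV_Pe[OF assms(1) e assms(2), of x] by simp
  qed simp
qed

lemma robustQ_QW: assumes "markov_policy H \<pi>" "h \<in> {1..H}"
  shows "robustQ H R Pstar U \<pi> h x a = QW \<pi> h x a"
proof (rule antisym)
  have h1: "1 \<le> Suc h" by simp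
  have ne: "adversaries H Pstar U \<noteq> {}" using Pe_adv[OF assms(1), of 1] by auto
  have bd: "bdd_below ((\<lambda>Pt. evalQ H R Pt \<pi> h x a) ` adversaries H Pstar U)"
    using evalV_nn[OF _ assms(1) h1] Rnn[OF assms(2)] pnn[OF adv_row[OF _ assms(2)]]
    by (intro bdd_belowI[where m=0]) (auto simp: evalQ_def intro!: add_nonneg_nonneg sum_nonneg mult_nonneg_nonneg)
  show "QW \<pi> h x a \<le> robustQ H R Pstar U \<pi> h x a"
    unfolding robustQ_def
  proof (intro cINF_greatest[OF ne])
    fix Pt assume Pt: "Pt \<in> adversaries H Pstar U"
    have "QW \<pi> h x a \<le> R h x a + (\<Sum>s'\<in>UNIV. Pt h x a s' * W \<pi> (Suc h) s')"
      unfolding QW_def using cINF_lower[OF bdd[OF assms(1)] adv_row[OF Pt assms(2)]] by simp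
    also have "\<dots> \<le> evalQ H R Pt \<pi> h x a"
      unfolding evalQ_def using evalV_geW[OF Pt assms(1) h1] pnn[OF adv_row[OF Pt assms(2)]]
      by (intro add_left_mono sum_mono mult_left_mono) auto
    finally show "QW \<pi> h x a \<le> evalQ H R Pt \<pi> h x a" .
  qed
  show "robustQ H R Pstar U \<pi> h x a \<le> QW \<pi> h x a"
  proof (rule le_eps)
    fix e :: real assume e: "0 < e"
    note P = Pe_prop[OF assms(1) e assms(2), of x a]
    have "robustQ H R Pstar U \<pi> h x a \<le> evalQ H R (Pe \<pi> e) \<pi> h x a"
      unfolding robustQ_def using cINF_lower[OF bd Pe_adv[OF assms(1) e]] by simp
    also have "\<dots> \<le> R h x a + (\<Sum>s'\<in>UNIV. Pe \<pi> e h x a s' * (W \<pi> (Suc h) s' + real (Suc H - Suc h) * e))"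
      unfolding evalQ_def using evalV_Pe[OF assms(1) e h1] pnn[OF conjunct1[OF P]]
      by (intro add_left_mono sum_mono mult_left_mono) auto
    also have "\<dots> = R h x a + (\<Sum>s'\<in>UNIV. Pe \<pi> e h x a s' * W \<pi> (Suc h) s') + real (Suc H - Suc h) * e"
      using psum[OF conjunct1[OF P]]
      by (simp add: distrib_left sum.distrib flip: sum_distrib_right)
    also have "\<dots> \<le> QW \<pi> h x a + e + real (Suc H - Suc h) * e"
      using P unfolding QW_def by simp
    also have "\<dots> = QW \<pi> h x a + real (Suc H - h) * e"
      using assms(2) by (simp add: Suc_diff_le algebra_simps)
    finally show "robustQ H R Pstar U \<pi> h x a \<le> QW \<pi> h x a + real (Suc H - h) * e" .
  qed simp
qed


lemma QW_le: assumes "markov_policy H \<pi>" "h \<in> {1..H}" "Pd \<in> U (Pstar h) x a"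
  shows "QW \<pi> h x a \<le> R h x a + (\<Sum>y\<in>UNIV. Pd y * W \<pi> (Suc h) y)"
  unfolding QW_def using cINF_lower[OF bdd[OF assms(1)] assms(3)] by simp

lemma QW_ge: assumes "h \<in> {1..H}" "\<And>p. p \<in> U (Pstar h) x a \<Longrightarrow>
     (\<Sum>y\<in>UNIV. Pd y * W \<pi> (Suc h) y) \<le> (\<Sum>y\<in>UNIV. p y * W \<pi> (Suc h) y)"
  shows "R h x a + (\<Sum>y\<in>UNIV. Pd y * W \<pi> (Suc h) y) \<le> QW \<pi> h x a"
  unfolding QW_def using assms by (intro add_left_mono cINF_greatest[OF Une]) auto

end

lemma occ_nn: assumes "\<forall>h\<in>{1..H}. \<forall>x b y. 0 \<le> Pd h x b y" "\<forall>h\<in>{1..H}. \<forall>x b. 0 \<le> p h x b" "k \<le> H"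
  shows "0 \<le> occ Pd p s k y"
  using assms(3)
proof (induction k arbitrary: y)
  case 0 then show ?case by simp
next
  case (Suc k)
  then show ?case using assms(1,2)
    by (auto intro!: sum_nonneg mult_nonneg_nonneg)
qed

theorem lemma2:
  fixes H :: nat
    and R :: "nat \<Rightarrow> 's::finite \<Rightarrow> 'a::finite \<Rightarrow> real"
    and Pstar :: "nat \<Rightarrow> 's \<Rightarrow> 'a \<Rightarrow> 's \<Rightarrow> real"
    and U :: "('s \<Rightarrow> 'a \<Rightarrow> 's \<Rightarrow> real) \<Rightarrow> 's \<Rightarrow> 'a \<Rightarrow> ('s \<Rightarrow> real) set"
    and \<pi>star \<pi> :: "nat \<Rightarrow> 's \<Rightarrow> 'a \<Rightarrow> real"
    and Pdag :: "nat \<Rightarrow> 's \<Rightarrow> 'a \<Rightarrow> 's \<Rightarrow> real"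
    and s :: 's
  assumes R_range: "\<forall>h\<in>{1..H}. \<forall>x b. 0 \<le> R h x b \<and> R h x b \<le> 1"
    and Pstar_kernel: "kernel H Pstar"
    and U_dist: "\<forall>Q x b. \<forall>p\<in>U Q x b. is_dist p"
    and pistar_markov: "markov_policy H \<pi>star"
    and pistar_opt: "\<forall>\<pi>'. markov_policy H \<pi>' \<longrightarrow>
          (\<forall>x. robustV H R Pstar U \<pi>' 1 x \<le> robustV H R Pstar U \<pi>star 1 x)"
    and Pdag_in: "\<forall>h\<in>{1..H}. \<forall>x b. Pdag h x b \<in> U (Pstar h) x b"
    and Pdag_min: "\<forall>h\<in>{1..H}. \<forall>x b. \<forall>p\<in>U (Pstar h) x b.
          (\<Sum>y\<in>UNIV. Pdag h x b y * robustV H R Pstar U \<pi>star (Suc h) y)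
          \<le> (\<Sum>y\<in>UNIV. p y * robustV H R Pstar U \<pi>star (Suc h) y)"
    and pi_markov: "markov_policy H \<pi>"
  shows "robustV H R Pstar U \<pi>star 1 s - robustV H R Pstar U \<pi> 1 s \<ge>
    traj_exp H Pdag \<pi>star s
      (\<lambda>h y. \<Sum>a\<in>UNIV. (\<pi>star h y a - \<pi> h y a) * robustQ H R Pstar U \<pi> h y a)"
proof -
  interpret rm H R Pstar U
    using R_range U_dist Pdag_in by unfold_locales (auto, metis atLeastAtMost_iff empty_iff)
  define D where "D h y = W \<pi>star h y - W \<pi> h y" for h y
  define g where "g h y = (\<Sum>a\<in>UNIV. (\<pi>star h y a - \<pi> h y a) * QW \<pi> h y a)" for h y
  have Pmin: "\<And>h x b p. h \<in> {1..H} \<Longrightarrow> p \<in> U (Pstar h) x b \<Longrightarrow>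
          (\<Sum>y\<in>UNIV. Pdag h x b y * W \<pi>star (Suc h) y) \<le> (\<Sum>y\<in>UNIV. p y * W \<pi>star (Suc h) y)"
    using Pdag_min robustV_W[OF pistar_markov, of "Suc _"] by auto
  have Pdnn: "\<forall>h\<in>{1..H}. \<forall>x b y. 0 \<le> Pdag h x b y" using Pdag_in pnn by blast
  have pinn: "\<forall>h\<in>{1..H}. \<forall>x b. 0 \<le> \<pi>star h x b" using pol_nn[OF pistar_markov] by blast
  have key: "g h x + (\<Sum>a\<in>UNIV. \<pi>star h x a * (\<Sum>y\<in>UNIV. Pdag h x a y * D (Suc h) y)) \<le> D h x"
    if hH: "h \<in> {1..H}" for h x
  proof -
    have "\<pi>star h x a * (\<Sum>y\<in>UNIV. Pdag h x a y * D (Suc h) y) \<le> \<pi>star h x a * (QW \<pi>star h x a - QW \<pi> h x a)" for a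
    proof -
      have "(\<Sum>y\<in>UNIV. Pdag h x a y * D (Suc h) y) = 
         (R h x a + (\<Sum>y\<in>UNIV. Pdag h x a y * W \<pi>star (Suc h) y)) - (R h x a + (\<Sum>y\<in>UNIV. Pdag h x a y * W \<pi> (Suc h) y))"
        unfolding D_def by (simp add: right_diff_distrib sum_subtractf)
      also have "\<dots> \<le> QW \<pi>star h x a - QW \<pi> h x a"
        using QW_ge[OF hH Pmin[OF hH]] QW_le[OF pi_markov hH] Pdag_in hH by (intro diff_mono) auto
      finally show ?thesis using pinn hH by (intro mult_left_mono) auto
    qed
    then have "(\<Sum>a\<in>UNIV. \<pi>star h x a * (\<Sum>y\<in>UNIV. Pdag h x a y * D (Suc h) y))
        \<le> (\<Sum>a\<in>UNIV. \<pi>star h x a * (QW \<pi>star h x a - QW \<pi> h x a))" by (rule sum_mono)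
    moreover have "D h x = g h x + (\<Sum>a\<in>UNIV. \<pi>star h x a * (QW \<pi>star h x a - QW \<pi> h x a))"
      using hH unfolding D_def g_def
      by (simp add: W_unf algebra_simps sum_subtractf sum.distrib)
    ultimately show ?thesis by simp
  qed
  have unroll: "(\<Sum>h=1..k. \<Sum>y\<in>UNIV. occ Pdag \<pi>star s (h - 1) y * g h y)
      + (\<Sum>y\<in>UNIV. occ Pdag \<pi>star s k y * D (Suc k) y) \<le> D 1 s" if "k \<le> H" for k
    using that
  proof (induction k)
    case 0
    have "(\<Sum>y\<in>UNIV. occ Pdag \<pi>star s 0 y * D 1 y) = D 1 s" by (simp add: if_distrib[of "\<lambda>c. c * _"] cong: if_cong)
    then show ?case by simp
  next
    case (Suc k)
    have kH: "Suc k \<in> {1..H}" using Suc by auto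
    have "(\<Sum>y\<in>UNIV. occ Pdag \<pi>star s k y * (g (Suc k) y +
        (\<Sum>a\<in>UNIV. \<pi>star (Suc k) y a * (\<Sum>y'\<in>UNIV. Pdag (Suc k) y a y' * D (Suc (Suc k)) y'))))
       \<le> (\<Sum>y\<in>UNIV. occ Pdag \<pi>star s k y * D (Suc k) y)"
      using key[OF kH] occ_nn[OF Pdnn pinn, of k] Suc by (intro sum_mono mult_left_mono) auto
    moreover have "(\<Sum>y\<in>UNIV. occ Pdag \<pi>star s k y * (\<Sum>a\<in>UNIV. \<pi>star (Suc k) y a * (\<Sum>y'\<in>UNIV. Pdag (Suc k) y a y' * D (Suc (Suc k)) y')))
       = (\<Sum>y'\<in>UNIV. occ Pdag \<pi>star s (Suc k) y' * D (Suc (Suc k)) y')"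
    proof -
      define f where "f x a y' = occ Pdag \<pi>star s k x * \<pi>star (Suc k) x a * Pdag (Suc k) x a y' * D (Suc (Suc k)) y'" for x a y'
      have l: "(\<Sum>y\<in>UNIV. occ Pdag \<pi>star s k y * (\<Sum>a\<in>UNIV. \<pi>star (Suc k) y a * (\<Sum>y'\<in>UNIV. Pdag (Suc k) y a y' * D (Suc (Suc k)) y')))
         = (\<Sum>x\<in>UNIV. \<Sum>a\<in>UNIV. \<Sum>y'\<in>UNIV. f x a y')"
        unfolding f_def by (simp add: sum_distrib_left mult.assoc)
      have r: "(\<Sum>y'\<in>UNIV. occ Pdag \<pi>star s (Suc k) y' * D (Suc (Suc k)) y')
         = (\<Sum>y'\<in>UNIV. \<Sum>x\<in>UNIV. \<Sum>a\<in>UNIV. f x a y')"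
        unfolding f_def by (simp add: sum_distrib_right)
      have m: "(\<Sum>y'\<in>UNIV. \<Sum>x\<in>UNIV. \<Sum>a\<in>UNIV. f x a y') = (\<Sum>x\<in>UNIV. \<Sum>a\<in>UNIV. \<Sum>y'\<in>UNIV. f x a y')"
        by (rule trans[OF sum.swap], rule sum.cong[OF refl], rule sum.swap)
      show ?thesis using l r m by simp
    qed
    ultimately show ?case using Suc
      by (simp add: distrib_left sum.distrib)
  qed
  have "traj_exp H Pdag \<pi>star s
      (\<lambda>h y. \<Sum>a\<in>UNIV. (\<pi>star h y a - \<pi> h y a) * robustQ H R Pstar U \<pi> h y a)
      = (\<Sum>h=1..H. \<Sum>y\<in>UNIV. occ Pdag \<pi>star s (h - 1) y * g h y)"
    unfolding traj_exp_def g_def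
    by (intro sum.cong refl) (simp add: robustQ_QW[OF pi_markov])
  also have "\<dots> \<le> D 1 s" using unroll[of H] by (simp add: D_def W_end)
  finally show ?thesis
    by (simp add: D_def robustV_W[OF pi_markov] robustV_W[OF pistar_markov])
qed

end
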